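(* For any finitely generated group $H$, the set $\mathcal E_H=\{G\in\mathcal G:\ H\text{ is embeddable into }\overline G\}$ is $F_\sigma$ in $\mathcal G$.
   Context: Let $\mathbb N=\{1,2,3,\dots\}$. Equip $\mathbb N^{\mathbb N\times\mathbb N}$ with the product topology of the discrete topology on $\mathbb N$. Let $\mathcal G$ be the subspace consisting of those $A\in\mathbb N^{\mathbb N\times\mathbb N}$ that are the multiplication table of a group on the underlying set $\mathbb N$ whose identity element is $1$. For $G\in\mathcal G$, $\overline G$ denotes the group on $\mathbb N$ with multiplication table $G$. *)

theory Defs
  imports "HOL-Analysis.Analysis" "HOL-Algebra.Generated_Groups"
begin

definition Npos :: "nat set" where "Npos = {n. 1 \<le> n}"

definition table_space :: "(nat \<times> nat \<Rightarrow> nat) topology" where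
  "table_space = product_topology (\<lambda>_. discrete_topology Npos) (Npos \<times> Npos)"

definition table_monoid :: "(nat \<times> nat \<Rightarrow> nat) \<Rightarrow> nat monoid" where
  "table_monoid A = \<lparr>carrier = Npos, mult = (\<lambda>x y. A (x, y)), one = 1\<rparr>"

definition group_tables :: "(nat \<times> nat \<Rightarrow> nat) set" where
  "group_tables = {A \<in> topspace table_space. group (table_monoid A)}"

definition group_tables_top :: "(nat \<times> nat \<Rightarrow> nat) topology" where
  "group_tables_top = subtopology table_space group_tables"

definition finitely_generated_group :: "('a, 'b) monoid_scheme \<Rightarrow> bool" where
  "finitely_generated_group H \<longleftrightarrow> group H \<and>
     (\<exists>S. finite S \<and> S \<subseteq> carrier H \<and> generate H S = carrier H)"

definition embeddable :: "('a, 'b) monoid_scheme \<Rightarrow> ('c, 'd) monoid_scheme \<Rightarrow> bool" where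
  "embeddable H K \<longleftrightarrow> (\<exists>h. h \<in> hom H K \<and> inj_on h (carrier H))"

end

theory Submission
  imports Defs
begin

datatype 'a wd = WOne | WGen 'a | WInv 'a | WMul "'a wd" "'a wd"

primrec evalw :: "('c,'d) monoid_scheme \<Rightarrow> ('a \<Rightarrow> 'c) \<Rightarrow> 'a wd \<Rightarrow> 'c" where
  "evalw M f WOne = \<one>\<^bsub>M\<^esub>"
| "evalw M f (WGen s) = f s"
| "evalw M f (WInv s) = inv\<^bsub>M\<^esub> (f s)"
| "evalw M f (WMul u v) = evalw M f u \<otimes>\<^bsub>M\<^esub> evalw M f v"

lemma evalw_carrier:
  "group M \<Longrightarrow> (\<forall>s\<in>set_wd w. f s \<in> carrier M) \<Longrightarrow> evalw M f w \<in> carrier M"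
  by (induction w) (auto intro: group.inv_closed monoid.m_closed group.is_monoid monoid.one_closed)

lemma generate_words:
  assumes "x \<in> generate H S" shows "\<exists>w. set_wd w \<subseteq> S \<and> evalw H (\<lambda>x. x) w = x"
  using assms
proof (induction rule: generate.induct)
  case one thus ?case by (intro exI[of _ WOne]) simp
next
  case (incl h) thus ?case by (intro exI[of _ "WGen h"]) simp
next
  case (inv h) thus ?case by (intro exI[of _ "WInv h"]) simp
next
  case (eng h1 h2)
  then obtain u v where "set_wd u \<subseteq> S" "evalw H (\<lambda>x. x) u = h1" "set_wd v \<subseteq> S" "evalw H (\<lambda>x. x) v = h2"
    by blast
  thus ?case by (intro exI[of _ "WMul u v"]) auto
qed

lemma hom_evalw:
  assumes H: "group H" and K: "group K" and h: "h \<in> hom H K" and w: "set_wd w \<subseteq> carrier H"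
  shows "h (evalw H (\<lambda>x. x) w) = evalw K h w"
  using w
proof (induction w)
  case WOne thus ?case using hom_one[OF h H K] by simp
next
  case (WGen x) thus ?case by simp
next
  case (WInv x)
  have "group_hom H K h" using H K h by (simp add: group_hom_def group_hom_axioms_def)
  thus ?case using WInv by (simp add: group_hom.hom_inv)
next
  case (WMul u v)
  have "evalw H (\<lambda>x. x) u \<in> carrier H" "evalw H (\<lambda>x. x) v \<in> carrier H"
    using WMul.prems by (auto intro!: evalw_carrier H)
  thus ?case using WMul by (simp add: hom_mult[OF h])
qed

lemma embed_char:
  assumes H: "group H" and T: "group T" and SH: "S \<subseteq> carrier H"
    and gen: "generate H S = carrier H" and g: "g ` S \<subseteq> carrier T"
  shows "(\<exists>h. h \<in> hom H T \<and> inj_on h (carrier H) \<and> (\<forall>s\<in>S. h s = g s)) \<longleftrightarrow>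
    (\<forall>u v. set_wd u \<subseteq> S \<longrightarrow> set_wd v \<subseteq> S \<longrightarrow>
       (evalw H (\<lambda>x. x) u = evalw H (\<lambda>x. x) v \<longleftrightarrow> evalw T g u = evalw T g v))"
proof
  assume "\<exists>h. h \<in> hom H T \<and> inj_on h (carrier H) \<and> (\<forall>s\<in>S. h s = g s)"
  then obtain h where h: "h \<in> hom H T" "inj_on h (carrier H)" "\<forall>s\<in>S. h s = g s" by blast
  show "\<forall>u v. set_wd u \<subseteq> S \<longrightarrow> set_wd v \<subseteq> S \<longrightarrow>
       (evalw H (\<lambda>x. x) u = evalw H (\<lambda>x. x) v \<longleftrightarrow> evalw T g u = evalw T g v)"
  proof (intro allI impI)
    fix u v assume u: "set_wd u \<subseteq> S" and v: "set_wd v \<subseteq> S"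
    have e: "evalw T h w = evalw T g w" if "set_wd w \<subseteq> S" for w
      using that h(3) by (induction w) auto
    have hu: "h (evalw H (\<lambda>x. x) u) = evalw T g u"
      using hom_evalw[OF H T h(1)] u SH e[OF u] by auto
    have hv: "h (evalw H (\<lambda>x. x) v) = evalw T g v"
      using hom_evalw[OF H T h(1)] v SH e[OF v] by auto
    have cu: "evalw H (\<lambda>x. x) u \<in> carrier H" using u SH by (intro evalw_carrier H) auto
    have cv: "evalw H (\<lambda>x. x) v \<in> carrier H" using v SH by (intro evalw_carrier H) auto
    show "evalw H (\<lambda>x. x) u = evalw H (\<lambda>x. x) v \<longleftrightarrow> evalw T g u = evalw T g v"
      using inj_on_eq_iff[OF h(2) cu cv] hu hv by simp
  qed
next
  assume C: "\<forall>u v. set_wd u \<subseteq> S \<longrightarrow> set_wd v \<subseteq> S \<longrightarrow>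
       (evalw H (\<lambda>x. x) u = evalw H (\<lambda>x. x) v \<longleftrightarrow> evalw T g u = evalw T g v)"
  define rep where "rep x = (SOME w. set_wd w \<subseteq> S \<and> evalw H (\<lambda>x. x) w = x)" for x
  have rep: "set_wd (rep x) \<subseteq> S \<and> evalw H (\<lambda>x. x) (rep x) = x" if "x \<in> carrier H" for x
  proof -
    have "\<exists>w. set_wd w \<subseteq> S \<and> evalw H (\<lambda>x. x) w = x" using generate_words[of x H S] that gen by simp
    thus ?thesis unfolding rep_def by (rule someI_ex)
  qed
  define h where "h x = evalw T g (rep x)" for x
  have key: "h x = evalw T g w" if "x \<in> carrier H" "set_wd w \<subseteq> S" "evalw H (\<lambda>x. x) w = x" for x w
    using C[rule_format, OF conjunct1[OF rep[OF that(1)]] that(2)] rep[OF that(1)] that(3)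
    unfolding h_def by simp
  have hc: "h x \<in> carrier T" if "x \<in> carrier H" for x
    unfolding h_def using rep[OF that] g by (intro evalw_carrier T) auto
  have "h \<in> hom H T"
  proof (rule homI)
    fix x assume "x \<in> carrier H" thus "h x \<in> carrier T" by (rule hc)
  next
    fix x y assume x: "x \<in> carrier H" and y: "y \<in> carrier H"
    have "h (x \<otimes>\<^bsub>H\<^esub> y) = evalw T g (WMul (rep x) (rep y))"
      using rep[OF x] rep[OF y] by (intro key monoid.m_closed[OF group.is_monoid[OF H] x y]) simp_all
    thus "h (x \<otimes>\<^bsub>H\<^esub> y) = h x \<otimes>\<^bsub>T\<^esub> h y" by (simp add: h_def)
  qed
  moreover have "inj_on h (carrier H)"
  proof (rule inj_onI)
    fix x y assume x: "x \<in> carrier H" and y: "y \<in> carrier H" and e: "h x = h y"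
    show "x = y" using C[rule_format, OF conjunct1[OF rep[OF x]] conjunct1[OF rep[OF y]]] rep[OF x] rep[OF y] e
      unfolding h_def by simp
  qed
  moreover have "\<forall>s\<in>S. h s = g s"
  proof
    fix s assume s: "s \<in> S"
    have "h s = evalw T g (WGen s)" using s SH by (intro key) auto
    thus "h s = g s" by simp
  qed
  ultimately show "\<exists>h. h \<in> hom H T \<and> inj_on h (carrier H) \<and> (\<forall>s\<in>S. h s = g s)" by blast
qed

lemma topspace_table: "topspace table_space = PiE (Npos \<times> Npos) (\<lambda>_. Npos)"
  by (simp add: table_space_def topspace_product_topology)

lemma open_coord:
  assumes "p \<in> Npos \<times> Npos" "c \<in> Npos"
  shows "openin table_space {G \<in> topspace table_space. G p = c}"
proof -
  have "continuous_map table_space (discrete_topology Npos) (\<lambda>G. G p)"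
    unfolding table_space_def using continuous_map_product_projection[OF assms(1), of "\<lambda>_. discrete_topology Npos"]
    by simp
  then have "openin table_space {G \<in> topspace table_space. G p \<in> {c}}"
    by (rule openin_continuous_map_preimage) (simp add: assms)
  thus ?thesis by simp
qed

lemma carrier_tm [simp]: "carrier (table_monoid G) = Npos"
  and mult_tm [simp]: "x \<otimes>\<^bsub>table_monoid G\<^esub> y = G (x, y)"
  and one_tm [simp]: "\<one>\<^bsub>table_monoid G\<^esub> = 1"
  by (simp_all add: table_monoid_def)

lemma gt_D: "G \<in> group_tables \<Longrightarrow> G \<in> topspace table_space \<and> group (table_monoid G)"
  by (simp add: group_tables_def)

lemma loc_const:
  assumes "G \<in> group_tables" "\<forall>s\<in>set_wd w. g s \<in> Npos"
  shows "\<exists>U. openin table_space U \<and> G \<in> U \<and>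
    (\<forall>G'\<in>U \<inter> group_tables. evalw (table_monoid G') g w = evalw (table_monoid G) g w)"
  using assms(2)
proof (induction w)
  case WOne thus ?case using gt_D[OF assms(1)] by (intro exI[of _ "topspace table_space"]) auto
next
  case (WGen s) thus ?case using gt_D[OF assms(1)] by (intro exI[of _ "topspace table_space"]) auto
next
  case (WInv s)
  have grp: "group (table_monoid G)" and top: "G \<in> topspace table_space" using gt_D[OF assms(1)] by auto
  define x where "x = g s"
  have x: "x \<in> Npos" using WInv x_def by simp
  define y where "y = inv\<^bsub>table_monoid G\<^esub> x"
  have y: "y \<in> Npos" using group.inv_closed[OF grp, of x] x y_def by simp
  have yx: "G (y, x) = 1" using group.l_inv[OF grp, of x] x y_def by simp
  let ?U = "{G' \<in> topspace table_space. G' (y, x) = 1}"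
  have "openin table_space ?U" using x y by (intro open_coord) (auto simp: Npos_def)
  moreover have "G \<in> ?U" using top yx by simp
  moreover have "\<forall>G'\<in>?U \<inter> group_tables. evalw (table_monoid G') g (WInv s) = evalw (table_monoid G) g (WInv s)"
  proof
    fix G' assume G': "G' \<in> ?U \<inter> group_tables"
    have grp': "group (table_monoid G')" using G' gt_D by blast
    have "inv\<^bsub>table_monoid G'\<^esub> x = y"
      using group.inv_equality[OF grp', of y x] G' x y by simp
    thus "evalw (table_monoid G') g (WInv s) = evalw (table_monoid G) g (WInv s)"
      by (simp add: x_def y_def)
  qed
  ultimately show ?case by blast
next
  case (WMul u v)
  have grp: "group (table_monoid G)" and top: "G \<in> topspace table_space" using gt_D[OF assms(1)] by auto
  obtain U1 where U1: "openin table_space U1" "G \<in> U1"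
    "\<forall>G'\<in>U1 \<inter> group_tables. evalw (table_monoid G') g u = evalw (table_monoid G) g u"
    using WMul by auto
  obtain U2 where U2: "openin table_space U2" "G \<in> U2"
    "\<forall>G'\<in>U2 \<inter> group_tables. evalw (table_monoid G') g v = evalw (table_monoid G) g v"
    using WMul by auto
  define a where "a = evalw (table_monoid G) g u"
  define b where "b = evalw (table_monoid G) g v"
  have a: "a \<in> Npos" unfolding a_def using evalw_carrier[OF grp, of u g] WMul.prems by simp
  have b: "b \<in> Npos" unfolding b_def using evalw_carrier[OF grp, of v g] WMul.prems by simp
  have ab: "G (a, b) \<in> Npos" using monoid.m_closed[OF group.is_monoid[OF grp], of a b] a b by simp
  let ?V = "{G' \<in> topspace table_space. G' (a, b) = G (a, b)}"
  have "openin table_space (U1 \<inter> U2 \<inter> ?V)" using U1 U2 a b ab by (intro openin_Int open_coord) auto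
  moreover have "G \<in> U1 \<inter> U2 \<inter> ?V" using U1 U2 top by simp
  moreover have "\<forall>G'\<in>(U1 \<inter> U2 \<inter> ?V) \<inter> group_tables.
     evalw (table_monoid G') g (WMul u v) = evalw (table_monoid G) g (WMul u v)"
    using U1(3) U2(3) by (auto simp: a_def b_def)
  ultimately show ?case by blast
qed

lemma closed_cond:
  assumes "\<forall>s\<in>set_wd u. g s \<in> Npos" "\<forall>s\<in>set_wd v. g s \<in> Npos"
  shows "closedin group_tables_top
    {G \<in> group_tables. P (evalw (table_monoid G) g u = evalw (table_monoid G) g v)}"
    (is "closedin _ ?C")
proof -
  have ts: "topspace group_tables_top = group_tables"
    using gt_D by (auto simp: group_tables_top_def)
  let ?O = "{G \<in> group_tables. \<not> P (evalw (table_monoid G) g u = evalw (table_monoid G) g v)}"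
  have "openin group_tables_top ?O"
  proof (subst openin_subopen, intro ballI)
    fix G assume G: "G \<in> ?O"
    obtain U1 where U1: "openin table_space U1" "G \<in> U1"
      "\<forall>G'\<in>U1 \<inter> group_tables. evalw (table_monoid G') g u = evalw (table_monoid G) g u"
      using loc_const[of G u g] G assms by auto
    obtain U2 where U2: "openin table_space U2" "G \<in> U2"
      "\<forall>G'\<in>U2 \<inter> group_tables. evalw (table_monoid G') g v = evalw (table_monoid G) g v"
      using loc_const[of G v g] G assms by auto
    have "openin group_tables_top ((U1 \<inter> U2) \<inter> group_tables)"
      unfolding group_tables_top_def using U1 U2 by (intro openin_subtopology_Int) auto
    moreover have "G \<in> (U1 \<inter> U2) \<inter> group_tables" using U1 U2 G by auto
    moreover have "(U1 \<inter> U2) \<inter> group_tables \<subseteq> ?O" using U1(3) U2(3) G by auto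
    ultimately show "\<exists>T. openin group_tables_top T \<and> G \<in> T \<and> T \<subseteq> ?O" by blast
  qed
  moreover have "topspace group_tables_top - ?C = ?O" using ts by auto
  ultimately show ?thesis unfolding closedin_def using ts by auto
qed

theorem lemma7p4:
  fixes H :: "('a, 'b) monoid_scheme"
  assumes "finitely_generated_group H"
  shows "fsigma_in group_tables_top {G \<in> group_tables. embeddable H (table_monoid G)}"
proof -
  obtain S where H: "group H" and S: "finite S" "S \<subseteq> carrier H" "generate H S = carrier H"
    using assms unfolding finitely_generated_group_def by blast
  define W where "W = {w. set_wd w \<subseteq> S}"
  define C where "C g = {G \<in> group_tables. \<forall>u v. set_wd u \<subseteq> S \<longrightarrow> set_wd v \<subseteq> S \<longrightarrow>
       (evalw H (\<lambda>x. x) u = evalw H (\<lambda>x. x) v \<longleftrightarrow> evalw (table_monoid G) g u = evalw (table_monoid G) g v)}" for g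
  have WOne_in: "(WOne, WOne) \<in> W \<times> W" by (simp add: W_def)
  have closedC: "closedin group_tables_top (C g)" if g: "g \<in> S \<rightarrow>\<^sub>E Npos" for g
  proof -
    have "C g = \<Inter> ((\<lambda>(u,v). {G \<in> group_tables. (evalw H (\<lambda>x. x) u = evalw H (\<lambda>x. x) v) =
        (evalw (table_monoid G) g u = evalw (table_monoid G) g v)}) ` (W \<times> W))"
      using WOne_in unfolding C_def W_def by (auto; metis empty_subsetI wd.set(1))
    moreover have "closedin group_tables_top (\<Inter> ((\<lambda>(u,v). {G \<in> group_tables. (evalw H (\<lambda>x. x) u = evalw H (\<lambda>x. x) v) =
        (evalw (table_monoid G) g u = evalw (table_monoid G) g v)}) ` (W \<times> W)))"
    proof (rule closedin_Inter)
      show "(\<lambda>(u,v). {G \<in> group_tables. (evalw H (\<lambda>x. x) u = evalw H (\<lambda>x. x) v) =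
        (evalw (table_monoid G) g u = evalw (table_monoid G) g v)}) ` (W \<times> W) \<noteq> {}"
        unfolding W_def by (auto intro: exI[of _ WOne])
    next
      fix X assume "X \<in> (\<lambda>(u,v). {G \<in> group_tables. (evalw H (\<lambda>x. x) u = evalw H (\<lambda>x. x) v) =
        (evalw (table_monoid G) g u = evalw (table_monoid G) g v)}) ` (W \<times> W)"
      then obtain u v where uv: "u \<in> W" "v \<in> W" and X: "X = {G \<in> group_tables. (evalw H (\<lambda>x. x) u = evalw H (\<lambda>x. x) v) =
        (evalw (table_monoid G) g u = evalw (table_monoid G) g v)}" by auto
      show "closedin group_tables_top X" unfolding X
        using uv g unfolding W_def by (intro closed_cond) auto
    qed
    ultimately show ?thesis by simp
  qed
  have eq: "{G \<in> group_tables. embeddable H (table_monoid G)} = \<Union> (C ` (S \<rightarrow>\<^sub>E Npos))"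
  proof (intro equalityI subsetI)
    fix G assume G: "G \<in> {G \<in> group_tables. embeddable H (table_monoid G)}"
    then have T: "group (table_monoid G)" and Ggt: "G \<in> group_tables" using gt_D by auto
    obtain h where h: "h \<in> hom H (table_monoid G)" "inj_on h (carrier H)"
      using G unfolding embeddable_def by auto
    define g where "g = restrict h S"
    have hS: "h s \<in> Npos" if "s \<in> S" for s
      using h(1) S(2) that unfolding hom_def by auto
    have g: "g \<in> S \<rightarrow>\<^sub>E Npos" unfolding g_def using hS by auto
    have "G \<in> C g" unfolding C_def using Ggt
      embed_char[OF H T S(2) S(3), of g] g h by (auto simp: g_def)
    thus "G \<in> \<Union> (C ` (S \<rightarrow>\<^sub>E Npos))" using g by blast
  next
    fix G assume "G \<in> \<Union> (C ` (S \<rightarrow>\<^sub>E Npos))"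
    then obtain g where g: "g \<in> S \<rightarrow>\<^sub>E Npos" and G: "G \<in> C g" by blast
    have T: "group (table_monoid G)" and Ggt: "G \<in> group_tables" using G gt_D unfolding C_def by auto
    have "\<exists>h. h \<in> hom H (table_monoid G) \<and> inj_on h (carrier H) \<and> (\<forall>s\<in>S. h s = g s)"
      using embed_char[OF H T S(2) S(3), of g] g G unfolding C_def by (auto simp: PiE_def Pi_def image_subset_iff)
    thus "G \<in> {G \<in> group_tables. embeddable H (table_monoid G)}"
      using Ggt unfolding embeddable_def by blast
  qed
  have "countable (S \<rightarrow>\<^sub>E Npos)" using S(1) by (intro countable_PiE) auto
  then have "fsigma_in group_tables_top (\<Union> (C ` (S \<rightarrow>\<^sub>E Npos)))"
    by (intro fsigma_in_Union) (auto intro: closed_imp_fsigma_in closedC)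
  thus ?thesis using eq by simp
qed

end
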